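(* Let $\hat v\in\{0,1\}^{\mathcal T}$ be the indicator vector of a proper triple set. Then the linear program $\mathrm{D}(\hat v)$ has an optimal solution $(\lambda,\mu)$ with $\lambda_{t,1}=\lambda_{t,2}=\lambda_{t,3}=0$ for every $t\in\mathcal T$ with $\hat v_t=0$.
   Context: A multilinear program has data $n,m$, coefficients $\alpha_i\in\mathbb{R}$ and nonempty index sets $J_i\subseteq[n]$. Let $\mathcal N=\bigcup_i\{J:\emptyset\ne J\subseteq J_i\}$ and $\beta_J=\sum_{i:J_i=J}\alpha_i$. A triple is $t=(J,J',J'')$ with $J''\in\mathcal N$, $|J''|\ge2$, $J,J'$ nonempty, disjoint, $J\cup J'=J''$, listed with $J,J'$ in lexicographic order; $\mathsf{tail1}(t)=J$, $\mathsf{tail2}(t)=J'$, $\mathsf{head}(t)=J''$; $\mathcal T$ is the set of all triples. A proper triple set is a set $T\subseteq\mathcal T$ containing a subset $T'$ such that (1) every $J_i$ with $|J_i|>1$ is the head of some triple in $T'$, and (2) whenever a set $J$ with $|J|>1$ is the first or second element of a triple in $T'$, $J$ is the head of a different triple in $T'$; its indicator vector has $\hat v_t=1$ iff $t\in T$. $\mathrm{D}(\hat v)$: maximize $-\sum_{t\in\mathcal T}[(1-\hat v_t)(\lambda_{t,1}+\lambda_{t,2})+(2-\hat v_t)\lambda_{t,3}]-\sum_{J\in\mathcal N}\mu_J$ over $\lambda\ge0,\mu\ge0$ subject to, for every $J\in\mathcal N$, $\beta_J+\sum_{t:\mathsf{tail1}(t)=J}(-\lambda_{t,1}+\lambda_{t,3})+\sum_{t:\mathsf{tail2}(t)=J}(-\lambda_{t,2}+\lambda_{t,3})+\sum_{t:\mathsf{head}(t)=J}(\lambda_{t,1}+\lambda_{t,2}-\lambda_{t,3})+\mu_J\ge0$.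 *)

theory Defs
  imports Complex_Main "HOL-Library.List_Lexorder"
begin

text \<open>Multilinear program data: m monomials, coefficients alpha i and index sets Js i
  (for i in {1..m}), each a nonempty subset of [n] = {1..n}.\<close>

type_synonym triple = "nat set \<times> nat set \<times> nat set"

definition NN :: "nat \<Rightarrow> (nat \<Rightarrow> nat set) \<Rightarrow> nat set set" where
  "NN m Js = (\<Union>i\<in>{1..m}. {J. J \<noteq> {} \<and> J \<subseteq> Js i})"

definition beta :: "nat \<Rightarrow> (nat \<Rightarrow> real) \<Rightarrow> (nat \<Rightarrow> nat set) \<Rightarrow> nat set \<Rightarrow> real" where
  "beta m alpha Js J = (\<Sum>i\<in>{i\<in>{1..m}. Js i = J}. alpha i)"

definition lex_less :: "nat set \<Rightarrow> nat set \<Rightarrow> bool" where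
  "lex_less J J' = (sorted_list_of_set J < sorted_list_of_set J')"

definition tail1 :: "triple \<Rightarrow> nat set" where "tail1 t = fst t"
definition tail2 :: "triple \<Rightarrow> nat set" where "tail2 t = fst (snd t)"
definition head :: "triple \<Rightarrow> nat set" where "head t = snd (snd t)"

definition triples :: "nat \<Rightarrow> (nat \<Rightarrow> nat set) \<Rightarrow> triple set" where
  "triples m Js = {(J, J', J''). J'' \<in> NN m Js \<and> card J'' \<ge> 2 \<and> J \<noteq> {} \<and> J' \<noteq> {}
      \<and> J \<inter> J' = {} \<and> J \<union> J' = J'' \<and> lex_less J J'}"

definition proper_triple_set :: "nat \<Rightarrow> (nat \<Rightarrow> nat set) \<Rightarrow> triple set \<Rightarrow> bool" where
  "proper_triple_set m Js T \<longleftrightarrow> T \<subseteq> triples m Js \<and>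
     (\<exists>T' \<subseteq> T.
        (\<forall>i\<in>{1..m}. card (Js i) > 1 \<longrightarrow> (\<exists>t\<in>T'. head t = Js i)) \<and>
        (\<forall>t\<in>T'. \<forall>J\<in>{tail1 t, tail2 t}. card J > 1 \<longrightarrow>
            (\<exists>t'\<in>T'. t' \<noteq> t \<and> head t' = J)))"

definition indicator_vec :: "triple set \<Rightarrow> triple \<Rightarrow> real" where
  "indicator_vec T t = (if t \<in> T then 1 else 0)"

definition D_obj :: "nat \<Rightarrow> (nat \<Rightarrow> nat set) \<Rightarrow> (triple \<Rightarrow> real) \<Rightarrow>
    (triple \<Rightarrow> real) \<Rightarrow> (triple \<Rightarrow> real) \<Rightarrow> (triple \<Rightarrow> real) \<Rightarrow> (nat set \<Rightarrow> real) \<Rightarrow> real" where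
  "D_obj m Js v l1 l2 l3 mu =
     - (\<Sum>t\<in>triples m Js. (1 - v t) * (l1 t + l2 t) + (2 - v t) * l3 t)
     - (\<Sum>J\<in>NN m Js. mu J)"

definition D_feasible :: "nat \<Rightarrow> (nat \<Rightarrow> real) \<Rightarrow> (nat \<Rightarrow> nat set) \<Rightarrow>
    (triple \<Rightarrow> real) \<Rightarrow> (triple \<Rightarrow> real) \<Rightarrow> (triple \<Rightarrow> real) \<Rightarrow> (nat set \<Rightarrow> real) \<Rightarrow> bool" where
  "D_feasible m alpha Js l1 l2 l3 mu \<longleftrightarrow>
     (\<forall>t\<in>triples m Js. l1 t \<ge> 0 \<and> l2 t \<ge> 0 \<and> l3 t \<ge> 0) \<and>
     (\<forall>J\<in>NN m Js. mu J \<ge> 0) \<and>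
     (\<forall>J\<in>NN m Js.
        beta m alpha Js J
        + (\<Sum>t\<in>{t\<in>triples m Js. tail1 t = J}. - l1 t + l3 t)
        + (\<Sum>t\<in>{t\<in>triples m Js. tail2 t = J}. - l2 t + l3 t)
        + (\<Sum>t\<in>{t\<in>triples m Js. head t = J}. l1 t + l2 t - l3 t)
        + mu J \<ge> 0)"

definition D_optimal :: "nat \<Rightarrow> (nat \<Rightarrow> real) \<Rightarrow> (nat \<Rightarrow> nat set) \<Rightarrow> (triple \<Rightarrow> real) \<Rightarrow>
    (triple \<Rightarrow> real) \<Rightarrow> (triple \<Rightarrow> real) \<Rightarrow> (triple \<Rightarrow> real) \<Rightarrow> (nat set \<Rightarrow> real) \<Rightarrow> bool" where
  "D_optimal m alpha Js v l1 l2 l3 mu \<longleftrightarrow>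
     D_feasible m alpha Js l1 l2 l3 mu \<and>
     (\<forall>l1' l2' l3' mu'. D_feasible m alpha Js l1' l2' l3' mu' \<longrightarrow>
        D_obj m Js v l1' l2' l3' mu' \<le> D_obj m Js v l1 l2 l3 mu)"

end

theory Submission
  imports Defs
begin


definition aff :: "('x \<Rightarrow> 'x \<Rightarrow> real \<Rightarrow> 'x) \<Rightarrow> ('x \<Rightarrow> real) \<Rightarrow> bool" where
  "aff sg g \<longleftrightarrow> (\<forall>x y t. g (sg x y t) = (1 - t) * g x + t * g y)"

definition PP :: "(('x \<Rightarrow> real) \<times> real) set \<Rightarrow> (('x \<Rightarrow> real) \<times> real) set \<Rightarrow> 'x set" where
  "PP C E = {x. (\<forall>(g,b)\<in>C. b \<le> g x) \<and> (\<forall>(g,b)\<in>E. g x = b)}"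

lemma convex_le:
  fixes a b c t :: real
  assumes "b \<le> a" "b \<le> c" "0 \<le> t" "t \<le> 1"
  shows "b \<le> (1 - t) * a + t * c"
proof -
  have "(1-t)*b \<le> (1-t)*a" using assms by (intro mult_left_mono) auto
  moreover have "t*b \<le> t*c" using assms by (intro mult_left_mono) auto
  ultimately show ?thesis by (simp add: algebra_simps)
qed

lemma lp_base:
  assumes E: "\<forall>(g,b)\<in>E. aff sg g" and f: "aff sg f" and ne: "PP {} E \<noteq> {}"
    and bd: "\<forall>x\<in>PP {} E. L \<le> f x"
  shows "\<exists>x\<in>PP {} E. \<forall>y\<in>PP {} E. f x \<le> f y"
proof -
  obtain x0 where x0: "x0 \<in> PP {} E" using ne by auto
  have "f x0 \<le> f y" if y: "y \<in> PP {} E" for y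
  proof (rule ccontr)
    assume "\<not> f x0 \<le> f y"
    hence lt: "f y < f x0" by simp
    define t where "t = (f x0 - L + 1) / (f x0 - f y)"
    have z: "sg x0 y t \<in> PP {} E"
      unfolding PP_def
    proof (clarsimp)
      fix g b assume gb: "(g, b) \<in> E"
      hence "aff sg g" using E by auto
      hence "g (sg x0 y t) = (1-t) * g x0 + t * g y" by (simp add: aff_def)
      moreover have "g x0 = b" "g y = b" using gb x0 y by (auto simp: PP_def)
      ultimately show "g (sg x0 y t) = b" by (simp add: algebra_simps)
    qed
    have "f (sg x0 y t) = f x0 - t * (f x0 - f y)" using f by (simp add: aff_def algebra_simps)
    also have "t * (f x0 - f y) = f x0 - L + 1" using lt by (simp add: t_def)
    finally have "f (sg x0 y t) = L - 1" by simp
    with bd z show False by force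
  qed
  with x0 show ?thesis by blast
qed

lemma lp_attain:
  assumes "finite C" "\<forall>(g,b)\<in>C. aff sg g" "\<forall>(g,b)\<in>E. aff sg g" "aff sg f"
    "PP C E \<noteq> {}" "\<forall>x\<in>PP C E. L \<le> f x"
  shows "\<exists>x\<in>PP C E. \<forall>y\<in>PP C E. f x \<le> f y"
  using assms
proof (induction C arbitrary: E L rule: finite_induct)
  case empty
  then show ?case using lp_base by blast
next
  case (insert k C)
  obtain gk bk where k: "k = (gk, bk)" by (cases k)
  let ?P = "PP (insert k C) E"
  let ?P' = "PP C E"
  let ?F = "PP C (insert k E)"
  have FP: "?F \<subseteq> ?P" using k by (auto simp: PP_def)
  have PP': "?P \<subseteq> ?P'" by (auto simp: PP_def)
  have affk: "aff sg gk" using insert.prems k by auto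
  have seg: "\<exists>z\<in>?F. f z \<le> f y" if y: "y \<in> ?P" and x: "x \<in> ?P'" and gx: "gk x < bk"
    and fx: "f x \<le> f y" for x y
  proof -
    have gy: "bk \<le> gk y" using y k by (auto simp: PP_def)
    define t where "t = (gk y - bk) / (gk y - gk x)"
    have t0: "0 \<le> t" "t \<le> 1" using gy gx by (auto simp: t_def divide_simps)
    have "gk (sg y x t) = gk y - t * (gk y - gk x)" using affk by (simp add: aff_def algebra_simps)
    also have "t * (gk y - gk x) = gk y - bk" using gy gx by (simp add: t_def)
    finally have gz: "gk (sg y x t) = bk" by simp
    have cC: "\<forall>(g,b)\<in>C. b \<le> g (sg y x t)"
    proof (intro ballI, clarify)
      fix g b assume gb: "(g,b) \<in> C"
      have "aff sg g" using insert.prems gb by auto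
      hence "g (sg y x t) = (1-t) * g y + t * g x" by (simp add: aff_def)
      moreover have "b \<le> g y" "b \<le> g x" using gb x y by (auto simp: PP_def)
      ultimately show "b \<le> g (sg y x t)" using convex_le t0 by simp
    qed
    have cE: "\<forall>(g,b)\<in>E. g (sg y x t) = b"
    proof (intro ballI, clarify)
      fix g b assume gb: "(g,b) \<in> E"
      have "aff sg g" using insert.prems gb by auto
      hence "g (sg y x t) = (1-t) * g y + t * g x" by (simp add: aff_def)
      moreover have "g y = b" "g x = b" using gb x y by (auto simp: PP_def)
      ultimately show "g (sg y x t) = b" by (simp add: algebra_simps)
    qed
    have zF: "sg y x t \<in> ?F" using cC cE gz k by (simp add: PP_def)
    have "f (sg y x t) = (1-t) * f y + t * f x" using insert.prems by (simp add: aff_def)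
    also have "\<dots> \<le> f y" using convex_le[of "- f y" "- f y" "- f x" t] fx t0 by (simp add: algebra_simps)
    finally show ?thesis using zF by blast
  qed
  have key: "(\<exists>x\<in>?P. \<forall>y\<in>?P. f x \<le> f y) \<or> (\<forall>y\<in>?P. \<exists>z\<in>?F. f z \<le> f y)"
  proof (cases "\<exists>L'. \<forall>x\<in>?P'. L' \<le> f x")
    case True
    then obtain L' where L': "\<forall>x\<in>?P'. L' \<le> f x" by blast
    have "?P' \<noteq> {}" using insert.prems PP' by blast
    then obtain xs where xs: "xs \<in> ?P'" "\<forall>y\<in>?P'. f xs \<le> f y"
      using insert.IH[of E L'] insert.prems L' by auto
    show ?thesis
    proof (cases "bk \<le> gk xs")
      case True
      hence "xs \<in> ?P" using xs k by (auto simp: PP_def)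
      then show ?thesis using xs PP' by blast
    next
      case False
      then show ?thesis using seg xs PP' by (meson in_mono not_le)
    qed
  next
    case False
    have "\<exists>z\<in>?F. f z \<le> f y" if y: "y \<in> ?P" for y
    proof -
      obtain x where x: "x \<in> ?P'" "f x < L" using False by (meson not_le)
      have "\<not> bk \<le> gk x"
      proof
        assume "bk \<le> gk x"
        hence "x \<in> ?P" using x k by (auto simp: PP_def)
        thus False using x insert.prems by force
      qed
      moreover have "f x \<le> f y" using x y insert.prems by force
      ultimately show ?thesis using seg x y by simp
    qed
    then show ?thesis by blast
  qed
  show ?case
    using key
  proof
    assume A: "\<forall>y\<in>?P. \<exists>z\<in>?F. f z \<le> f y"
    have "?F \<noteq> {}" using A insert.prems by blast
    moreover have "\<forall>x\<in>?F. L \<le> f x" using FP insert.prems by blast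
    moreover have "\<forall>(g,b)\<in>insert k E. aff sg g" using insert.prems k by auto
    ultimately obtain z0 where z0: "z0 \<in> ?F" "\<forall>y\<in>?F. f z0 \<le> f y"
      using insert.IH[of "insert k E" L] insert.prems by blast
    show ?thesis
    proof (intro bexI ballI)
      show "z0 \<in> ?P" using z0 FP by blast
      fix y assume "y \<in> ?P"
      then obtain z where "z \<in> ?F" "f z \<le> f y" using A by blast
      thus "f z0 \<le> f y" using z0 by force
    qed
  qed
qed



lemma transform:
  fixes T :: "triple set"
  assumes fin: "finite (triples m Js)" "finite (NN m Js)"
    and sub: "\<forall>t\<in>triples m Js. head t \<in> NN m Js \<and> tail1 t \<in> NN m Js \<and> tail2 t \<in> NN m Js"
    and feas: "D_feasible m alpha Js l1 l2 l3 mu"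
  shows "\<exists>l1' l2' l3' mu'. D_feasible m alpha Js l1' l2' l3' mu' \<and>
     D_obj m Js (indicator_vec T) l1' l2' l3' mu' = D_obj m Js (indicator_vec T) l1 l2 l3 mu \<and>
     (\<forall>t. t \<notin> T \<longrightarrow> l1' t = 0 \<and> l2' t = 0 \<and> l3' t = 0)"
proof -
  let ?Tr = "triples m Js" and ?N = "NN m Js" and ?v = "indicator_vec T"
  define d1 where "d1 t = (if t \<in> T then 0 else l1 t)" for t
  define d2 where "d2 t = (if t \<in> T then 0 else l2 t)" for t
  define d3 where "d3 t = (if t \<in> T then 0 else l3 t)" for t
  define l1' where "l1' t = l1 t - d1 t" for t
  define l2' where "l2' t = l2 t - d2 t" for t
  define l3' where "l3' t = l3 t - d3 t" for t
  define mu' where "mu' J = mu J + (\<Sum>t\<in>{t\<in>?Tr. head t = J}. d1 t + d2 t)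
     + (\<Sum>t\<in>{t\<in>?Tr. tail1 t = J}. d3 t) + (\<Sum>t\<in>{t\<in>?Tr. tail2 t = J}. d3 t)" for J
  have nn: "\<forall>t\<in>?Tr. l1 t \<ge> 0 \<and> l2 t \<ge> 0 \<and> l3 t \<ge> 0" "\<forall>J\<in>?N. mu J \<ge> 0"
    using feas by (auto simp: D_feasible_def)
  have dnn: "d1 t \<ge> 0" "d2 t \<ge> 0" "d3 t \<ge> 0" if "t \<in> ?Tr" for t
    using nn that by (auto simp: d1_def d2_def d3_def)
  have feas': "D_feasible m alpha Js l1' l2' l3' mu'"
    unfolding D_feasible_def
  proof (intro conjI ballI)
    fix t assume t: "t \<in> ?Tr"
    show "0 \<le> l1' t" using nn(1) t by (auto simp: l1'_def d1_def)
  next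
    fix t assume t: "t \<in> ?Tr"
    show "0 \<le> l2' t" using nn(1) t by (auto simp: l2'_def d2_def)
  next
    fix t assume t: "t \<in> ?Tr"
    show "0 \<le> l3' t" using nn(1) t by (auto simp: l3'_def d3_def)
  next
    fix J assume J: "J \<in> ?N"
    have "0 \<le> (\<Sum>t\<in>{t\<in>?Tr. head t = J}. d1 t + d2 t)"
      by (intro sum_nonneg) (auto intro: add_nonneg_nonneg dnn)
    moreover have "0 \<le> (\<Sum>t\<in>{t\<in>?Tr. tail1 t = J}. d3 t)" "0 \<le> (\<Sum>t\<in>{t\<in>?Tr. tail2 t = J}. d3 t)"
      by (auto intro!: sum_nonneg dnn)
    ultimately show "0 \<le> mu' J" using nn J by (simp add: mu'_def)
  next
    fix J assume J: "J \<in> ?N"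
    let ?A1 = "{t\<in>?Tr. tail1 t = J}" and ?A2 = "{t\<in>?Tr. tail2 t = J}" and ?A3 = "{t\<in>?Tr. head t = J}"
    have old: "0 \<le> beta m alpha Js J + (\<Sum>t\<in>?A1. - l1 t + l3 t) + (\<Sum>t\<in>?A2. - l2 t + l3 t)
        + (\<Sum>t\<in>?A3. l1 t + l2 t - l3 t) + mu J"
      using feas J by (simp add: D_feasible_def)
    have e1: "(\<Sum>t\<in>?A1. - l1' t + l3' t) = (\<Sum>t\<in>?A1. - l1 t + l3 t) + (\<Sum>t\<in>?A1. d1 t) - (\<Sum>t\<in>?A1. d3 t)"
    proof -
      have "(\<Sum>t\<in>?A1. - l1' t + l3' t) = (\<Sum>t\<in>?A1. (- l1 t + l3 t) + d1 t - d3 t)"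
        by (rule sum.cong) (auto simp: l1'_def l3'_def)
      also have "\<dots> = (\<Sum>t\<in>?A1. - l1 t + l3 t) + (\<Sum>t\<in>?A1. d1 t) - (\<Sum>t\<in>?A1. d3 t)"
        by (simp add: sum.distrib sum_subtractf)
      finally show ?thesis .
    qed
    have e2: "(\<Sum>t\<in>?A2. - l2' t + l3' t) = (\<Sum>t\<in>?A2. - l2 t + l3 t) + (\<Sum>t\<in>?A2. d2 t) - (\<Sum>t\<in>?A2. d3 t)"
    proof -
      have "(\<Sum>t\<in>?A2. - l2' t + l3' t) = (\<Sum>t\<in>?A2. (- l2 t + l3 t) + d2 t - d3 t)"
        by (rule sum.cong) (auto simp: l2'_def l3'_def)
      also have "\<dots> = (\<Sum>t\<in>?A2. - l2 t + l3 t) + (\<Sum>t\<in>?A2. d2 t) - (\<Sum>t\<in>?A2. d3 t)"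
        by (simp add: sum.distrib sum_subtractf)
      finally show ?thesis .
    qed
    have e3: "(\<Sum>t\<in>?A3. l1' t + l2' t - l3' t) = (\<Sum>t\<in>?A3. l1 t + l2 t - l3 t) - (\<Sum>t\<in>?A3. d1 t + d2 t) + (\<Sum>t\<in>?A3. d3 t)"
    proof -
      have "(\<Sum>t\<in>?A3. l1' t + l2' t - l3' t) = (\<Sum>t\<in>?A3. (l1 t + l2 t - l3 t) - (d1 t + d2 t) + d3 t)"
        by (rule sum.cong) (auto simp: l1'_def l2'_def l3'_def)
      also have "\<dots> = (\<Sum>t\<in>?A3. l1 t + l2 t - l3 t) - (\<Sum>t\<in>?A3. d1 t + d2 t) + (\<Sum>t\<in>?A3. d3 t)"
        by (simp add: sum.distrib sum_subtractf)
      finally show ?thesis .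
    qed
    have p: "0 \<le> (\<Sum>t\<in>?A1. d1 t)" "0 \<le> (\<Sum>t\<in>?A2. d2 t)" "0 \<le> (\<Sum>t\<in>?A3. d3 t)"
      by (auto intro!: sum_nonneg dnn)
    show "0 \<le> beta m alpha Js J + (\<Sum>t\<in>?A1. - l1' t + l3' t) + (\<Sum>t\<in>?A2. - l2' t + l3' t)
        + (\<Sum>t\<in>?A3. l1' t + l2' t - l3' t) + mu' J"
      unfolding e1 e2 e3 mu'_def using old p by linarith
  qed
  have o1: "(\<Sum>t\<in>?Tr. (1 - ?v t) * (l1' t + l2' t) + (2 - ?v t) * l3' t)
      = (\<Sum>t\<in>?Tr. (1 - ?v t) * (l1 t + l2 t) + (2 - ?v t) * l3 t) - (\<Sum>t\<in>?Tr. d1 t + d2 t) - (\<Sum>t\<in>?Tr. d3 t) - (\<Sum>t\<in>?Tr. d3 t)"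
  proof -
    have "(\<Sum>t\<in>?Tr. (1 - ?v t) * (l1' t + l2' t) + (2 - ?v t) * l3' t)
      = (\<Sum>t\<in>?Tr. ((1 - ?v t) * (l1 t + l2 t) + (2 - ?v t) * l3 t) - (d1 t + d2 t) - d3 t - d3 t)"
      by (rule sum.cong) (auto simp: l1'_def l2'_def l3'_def d1_def d2_def d3_def indicator_vec_def)
    also have "\<dots> = (\<Sum>t\<in>?Tr. (1 - ?v t) * (l1 t + l2 t) + (2 - ?v t) * l3 t) - (\<Sum>t\<in>?Tr. d1 t + d2 t) - (\<Sum>t\<in>?Tr. d3 t) - (\<Sum>t\<in>?Tr. d3 t)"
      by (simp only: sum_subtractf)
    finally show ?thesis .
  qed
  have g: "(\<Sum>J\<in>?N. \<Sum>t\<in>{t\<in>?Tr. h t = J}. k t) = (\<Sum>t\<in>?Tr. k t)"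
    if "h ` ?Tr \<subseteq> ?N" for h and k :: "triple \<Rightarrow> real"
    using sum.group[OF fin(1) fin(2) that, of k] by simp
  have o2: "(\<Sum>J\<in>?N. mu' J) = (\<Sum>J\<in>?N. mu J) + (\<Sum>t\<in>?Tr. d1 t + d2 t) + (\<Sum>t\<in>?Tr. d3 t) + (\<Sum>t\<in>?Tr. d3 t)"
  proof -
    have "(\<Sum>J\<in>?N. mu' J) = (\<Sum>J\<in>?N. mu J) + (\<Sum>J\<in>?N. \<Sum>t\<in>{t\<in>?Tr. head t = J}. d1 t + d2 t)
       + (\<Sum>J\<in>?N. \<Sum>t\<in>{t\<in>?Tr. tail1 t = J}. d3 t) + (\<Sum>J\<in>?N. \<Sum>t\<in>{t\<in>?Tr. tail2 t = J}. d3 t)"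
      by (simp add: mu'_def sum.distrib)
    also have "\<dots> = (\<Sum>J\<in>?N. mu J) + (\<Sum>t\<in>?Tr. d1 t + d2 t) + (\<Sum>t\<in>?Tr. d3 t) + (\<Sum>t\<in>?Tr. d3 t)"
      using sub by (subst g, blast)+ (simp add: g)
    finally show ?thesis .
  qed
  have obj: "D_obj m Js ?v l1' l2' l3' mu' = D_obj m Js ?v l1 l2 l3 mu"
    unfolding D_obj_def o1 o2 by simp
  have z: "\<forall>t. t \<notin> T \<longrightarrow> l1' t = 0 \<and> l2' t = 0 \<and> l3' t = 0"
    by (simp add: l1'_def l2'_def l3'_def d1_def d2_def d3_def)
  show ?thesis using feas' obj z by blast
qed



definition cmb :: "real \<Rightarrow> ('a \<Rightarrow> real) \<Rightarrow> ('a \<Rightarrow> real) \<Rightarrow> 'a \<Rightarrow> real" where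
  "cmb s u w = (\<lambda>i. (1 - s) * u i + s * w i)"

type_synonym xvar = "(triple \<Rightarrow> real) \<times> (triple \<Rightarrow> real) \<times> (triple \<Rightarrow> real) \<times> (nat set \<Rightarrow> real)"

definition sg4 :: "xvar \<Rightarrow> xvar \<Rightarrow> real \<Rightarrow> xvar" where
  "sg4 x y s = (cmb s (fst x) (fst y), cmb s (fst (snd x)) (fst (snd y)),
     cmb s (fst (snd (snd x))) (fst (snd (snd y))), cmb s (snd (snd (snd x))) (snd (snd (snd y))))"

lemma aff_const: "aff sg (\<lambda>x. c)" by (simp add: aff_def algebra_simps)
lemma aff_add: "aff sg g \<Longrightarrow> aff sg h \<Longrightarrow> aff sg (\<lambda>x. g x + h x)" by (simp add: aff_def algebra_simps)
lemma aff_diff: "aff sg g \<Longrightarrow> aff sg h \<Longrightarrow> aff sg (\<lambda>x. g x - h x)" by (simp add: aff_def algebra_simps)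
lemma aff_minus: "aff sg g \<Longrightarrow> aff sg (\<lambda>x. - g x)" by (simp add: aff_def algebra_simps)
lemma aff_cmul: "aff sg g \<Longrightarrow> aff sg (\<lambda>x. c * g x)" by (simp add: aff_def ring_distribs mult.left_commute)
lemma aff_sum: "(\<And>s. s \<in> A \<Longrightarrow> aff sg (h s)) \<Longrightarrow> aff sg (\<lambda>x. \<Sum>s\<in>A. h s x)"
  by (simp add: aff_def sum.distrib sum_distrib_left)
lemma aff_p1: "aff sg4 (\<lambda>x. fst x t)" by (simp add: aff_def sg4_def cmb_def)
lemma aff_p2: "aff sg4 (\<lambda>x. fst (snd x) t)" by (simp add: aff_def sg4_def cmb_def)
lemma aff_p3: "aff sg4 (\<lambda>x. fst (snd (snd x)) t)" by (simp add: aff_def sg4_def cmb_def)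
lemma aff_p4: "aff sg4 (\<lambda>x. snd (snd (snd x)) t)" by (simp add: aff_def sg4_def cmb_def)

lemmas aff_rules = aff_add aff_diff aff_minus aff_cmul aff_sum aff_p1 aff_p2 aff_p3 aff_p4 aff_const

lemma D_obj_le0:
  assumes "D_feasible m alpha Js l1 l2 l3 mu"
  shows "D_obj m Js (indicator_vec T) l1 l2 l3 mu \<le> 0"
proof -
  have a: "0 \<le> (\<Sum>t\<in>triples m Js. (1 - indicator_vec T t) * (l1 t + l2 t) + (2 - indicator_vec T t) * l3 t)"
    using assms by (intro sum_nonneg) (auto simp: D_feasible_def indicator_vec_def)
  have b: "0 \<le> (\<Sum>J\<in>NN m Js. mu J)"
    using assms by (intro sum_nonneg) (auto simp: D_feasible_def)
  show ?thesis using a b by (simp add: D_obj_def)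
qed

theorem lemma3:
  fixes n m :: nat and alpha :: "nat \<Rightarrow> real" and Js :: "nat \<Rightarrow> nat set"
    and T :: "triple set"
  assumes "\<forall>i\<in>{1..m}. Js i \<noteq> {} \<and> Js i \<subseteq> {1..n}"
    and "proper_triple_set m Js T"
  shows "\<exists>l1 l2 l3 mu. D_optimal m alpha Js (indicator_vec T) l1 l2 l3 mu \<and>
           (\<forall>t\<in>triples m Js. indicator_vec T t = 0 \<longrightarrow> l1 t = 0 \<and> l2 t = 0 \<and> l3 t = 0)"
proof -
  let ?Tr = "triples m Js" and ?N = "NN m Js" and ?v = "indicator_vec T"
  have Nsub: "?N \<subseteq> Pow {1..n}" using assms(1) by (auto simp: NN_def)
  have finN: "finite ?N" by (rule finite_subset[OF Nsub]) simp
  have Trsub: "?Tr \<subseteq> Pow {1..n} \<times> Pow {1..n} \<times> Pow {1..n}"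
    using Nsub by (auto simp: triples_def)
  have finTr: "finite ?Tr" by (rule finite_subset[OF Trsub]) simp
  have sub: "\<forall>t\<in>?Tr. head t \<in> ?N \<and> tail1 t \<in> ?N \<and> tail2 t \<in> ?N"
    by (auto simp: triples_def head_def tail1_def tail2_def NN_def)
  define cons :: "nat set \<Rightarrow> xvar \<Rightarrow> real" where
    "cons J x = beta m alpha Js J
        + (\<Sum>t\<in>{t\<in>?Tr. tail1 t = J}. - fst x t + fst (snd (snd x)) t)
        + (\<Sum>t\<in>{t\<in>?Tr. tail2 t = J}. - fst (snd x) t + fst (snd (snd x)) t)
        + (\<Sum>t\<in>{t\<in>?Tr. head t = J}. fst x t + fst (snd x) t - fst (snd (snd x)) t)
        + snd (snd (snd x)) J" for J x
  define C :: "((xvar \<Rightarrow> real) \<times> real) set" where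
    "C = (\<lambda>t. (\<lambda>x. fst x t, 0)) ` ?Tr \<union> (\<lambda>t. (\<lambda>x. fst (snd x) t, 0)) ` ?Tr
       \<union> (\<lambda>t. (\<lambda>x. fst (snd (snd x)) t, 0)) ` ?Tr \<union> (\<lambda>J. (\<lambda>x. snd (snd (snd x)) J, 0)) ` ?N
       \<union> (\<lambda>J. (cons J, 0)) ` ?N"
  define f :: "xvar \<Rightarrow> real" where
    "f x = - D_obj m Js ?v (fst x) (fst (snd x)) (fst (snd (snd x))) (snd (snd (snd x)))" for x
  have PPeq: "x \<in> PP C {} \<longleftrightarrow> D_feasible m alpha Js (fst x) (fst (snd x)) (fst (snd (snd x))) (snd (snd (snd x)))" for x
    by (simp add: PP_def C_def D_feasible_def cons_def ball_Un ball_conj_distrib conj_ac)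
  have finC: "finite C" using finTr finN by (simp add: C_def)
  have affC: "\<forall>(g,b)\<in>C. aff sg4 g"
    unfolding C_def cons_def by (auto intro!: aff_rules)
  have affE: "\<forall>(g,b)\<in>{}. aff sg4 g" by simp
  have afff: "aff sg4 f"
    unfolding f_def D_obj_def by (intro aff_rules)
  define x0 :: xvar where "x0 = ((\<lambda>_. 0), (\<lambda>_. 0), (\<lambda>_. 0), (\<lambda>J. max 0 (- beta m alpha Js J)))"
  have "x0 \<in> PP C {}" unfolding PPeq by (simp add: x0_def D_feasible_def max_def)
  hence ne: "PP C {} \<noteq> {}" by blast
  have bd: "\<forall>x\<in>PP C {}. 0 \<le> f x"
  proof
    fix x assume "x \<in> PP C {}"
    hence "D_feasible m alpha Js (fst x) (fst (snd x)) (fst (snd (snd x))) (snd (snd (snd x)))"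
      using PPeq by blast
    from D_obj_le0[OF this, of T] show "0 \<le> f x" by (simp add: f_def)
  qed
  obtain xs where xs: "xs \<in> PP C {}" "\<forall>y\<in>PP C {}. f xs \<le> f y"
    using lp_attain[OF finC affC affE afff ne bd] by blast
  obtain l1 l2 l3 mu where xse: "xs = (l1, l2, l3, mu)" by (cases xs) auto
  have feas: "D_feasible m alpha Js l1 l2 l3 mu" using xs(1) xse PPeq by simp
  have opt: "D_obj m Js ?v l1' l2' l3' mu' \<le> D_obj m Js ?v l1 l2 l3 mu"
    if "D_feasible m alpha Js l1' l2' l3' mu'" for l1' l2' l3' mu'
  proof -
    have "(l1', l2', l3', mu') \<in> PP C {}" using that PPeq by simp
    hence "f xs \<le> f (l1', l2', l3', mu')" using xs(2) by blast
    thus ?thesis by (simp add: f_def xse)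
  qed
  obtain k1 k2 k3 nu where k: "D_feasible m alpha Js k1 k2 k3 nu"
    "D_obj m Js ?v k1 k2 k3 nu = D_obj m Js ?v l1 l2 l3 mu"
    "\<forall>t. t \<notin> T \<longrightarrow> k1 t = 0 \<and> k2 t = 0 \<and> k3 t = 0"
    using transform[OF finTr finN sub feas, of T] by blast
  have "D_optimal m alpha Js ?v k1 k2 k3 nu"
    unfolding D_optimal_def using k opt by simp
  moreover have "\<forall>t\<in>?Tr. ?v t = 0 \<longrightarrow> k1 t = 0 \<and> k2 t = 0 \<and> k3 t = 0"
  proof (intro ballI impI)
    fix t assume "t \<in> ?Tr" "?v t = 0"
    hence "t \<notin> T" by (simp add: indicator_vec_def split: if_splits)
    thus "k1 t = 0 \<and> k2 t = 0 \<and> k3 t = 0" using k(3) by blast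
  qed
  ultimately show ?thesis by blast
qed

end
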